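(* Let $G=(V,E)$ be a node-symmetric graph and let $(q_J)_{J\in\{0,1\}^V}$ be a probability distribution on channel state vectors such that $q_J=q_K$ whenever the induced subgraphs $G_J$ and $G_K$ are isomorphic. Then the probability that the channel state is $1$ at node $a$, namely $\sum_{J:J_a=1}q_J$, is the same for all $a\in V$.
   Context: A channel state vector $J\in\{0,1\}^V$ gives the state ($1$ = available, $0$ = unavailable) of a primary's channel at each node; $G_J$ is the subgraph of $G$ induced by $\{a\in V: J_a=1\}$. $G$ is node symmetric (vertex transitive) if for all $a,b\in V$ there is an automorphism $F$ of $G$ (a bijection $V\to V$ preserving adjacency in both directions) with $F(a)=b$. Graphs $H,H'$ are isomorphic if there is a bijection between their vertex sets preserving adjacency in both directions. *)

theory Defs
  imports Complex_Main
begin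

definition simple_graph :: "'a set \<Rightarrow> ('a \<Rightarrow> 'a \<Rightarrow> bool) \<Rightarrow> bool" where
  "simple_graph V E \<longleftrightarrow> finite V \<and> (\<forall>a b. E a b \<longrightarrow> a \<in> V \<and> b \<in> V)
     \<and> (\<forall>a b. E a b \<longrightarrow> E b a) \<and> (\<forall>a. \<not> E a a)"

definition automorphism :: "'a set \<Rightarrow> ('a \<Rightarrow> 'a \<Rightarrow> bool) \<Rightarrow> ('a \<Rightarrow> 'a) \<Rightarrow> bool" where
  "automorphism V E F \<longleftrightarrow> bij_betw F V V \<and> (\<forall>a\<in>V. \<forall>b\<in>V. E a b \<longleftrightarrow> E (F a) (F b))"

definition node_symmetric :: "'a set \<Rightarrow> ('a \<Rightarrow> 'a \<Rightarrow> bool) \<Rightarrow> bool" where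
  "node_symmetric V E \<longleftrightarrow> (\<forall>a\<in>V. \<forall>b\<in>V. \<exists>F. automorphism V E F \<and> F a = b)"

definition graph_iso :: "'a set \<Rightarrow> ('a \<Rightarrow> 'a \<Rightarrow> bool) \<Rightarrow> 'b set \<Rightarrow> ('b \<Rightarrow> 'b \<Rightarrow> bool) \<Rightarrow> bool" where
  "graph_iso V1 E1 V2 E2 \<longleftrightarrow> (\<exists>f. bij_betw f V1 V2 \<and> (\<forall>a\<in>V1. \<forall>b\<in>V1. E1 a b \<longleftrightarrow> E2 (f a) (f b)))"

text \<open>Channel state vectors J \<in> {0,1}^V, represented as Boolean functions on V
(True = available), extensional outside V.\<close>
definition states :: "'a set \<Rightarrow> ('a \<Rightarrow> bool) set" where
  "states V = {J. \<forall>x. x \<notin> V \<longrightarrow> \<not> J x}"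

text \<open>Vertex set of the induced subgraph G_J; its edges are E restricted to it.\<close>
definition active :: "'a set \<Rightarrow> ('a \<Rightarrow> bool) \<Rightarrow> 'a set" where
  "active V J = {a \<in> V. J a}"

definition induced_iso :: "'a set \<Rightarrow> ('a \<Rightarrow> 'a \<Rightarrow> bool) \<Rightarrow> ('a \<Rightarrow> bool) \<Rightarrow> ('a \<Rightarrow> bool) \<Rightarrow> bool" where
  "induced_iso V E J K \<longleftrightarrow>
     graph_iso (active V J) (\<lambda>a b. a \<in> active V J \<and> b \<in> active V J \<and> E a b)
               (active V K) (\<lambda>a b. a \<in> active V K \<and> b \<in> active V K \<and> E a b)"

end

theory Submission
  imports Defs
begin

theorem lemma11:
  fixes V :: "'a set" and E :: "'a \<Rightarrow> 'a \<Rightarrow> bool" and q :: "('a \<Rightarrow> bool) \<Rightarrow> real"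
  assumes "simple_graph V E"
    and "node_symmetric V E"
    and "\<forall>J\<in>states V. q J \<ge> 0"
    and "(\<Sum>J\<in>states V. q J) = 1"
    and "\<forall>J\<in>states V. \<forall>K\<in>states V. induced_iso V E J K \<longrightarrow> q J = q K"
    and "a \<in> V" and "b \<in> V"
  shows "(\<Sum>J\<in>{J\<in>states V. J a}. q J) = (\<Sum>J\<in>{J\<in>states V. J b}. q J)"
proof -
  obtain F where aut: "automorphism V E F" and Fa: "F a = b"
    using assms(2,6,7) unfolding node_symmetric_def by blast
  have bij: "bij_betw F V V" and pres: "\<forall>x\<in>V. \<forall>y\<in>V. E x y \<longleftrightarrow> E (F x) (F y)"
    using aut unfolding automorphism_def by auto
  define G where "G = inv_into V F"
  have GF: "\<And>x. x \<in> V \<Longrightarrow> G (F x) = x" using bij unfolding G_def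
    by (simp add: bij_betw_imp_inj_on)
  have FG: "\<And>x. x \<in> V \<Longrightarrow> F (G x) = x" using bij unfolding G_def
    by (meson bij_betw_inv_into_right)
  have FV: "\<And>x. x \<in> V \<Longrightarrow> F x \<in> V" using bij by (meson bij_betwE)
  have GV: "\<And>x. x \<in> V \<Longrightarrow> G x \<in> V" using bij unfolding G_def
    by (metis bij_betw_def inv_into_into)
  define h where "h J = (\<lambda>x. x \<in> V \<and> J (F x))" for J :: "'a \<Rightarrow> bool"
  define g where "g J = (\<lambda>x. x \<in> V \<and> J (G x))" for J :: "'a \<Rightarrow> bool"
  have hb: "bij_betw h {J\<in>states V. J b} {J\<in>states V. J a}"
  proof (rule bij_betw_byWitness[where f'=g])
    show "\<forall>J\<in>{J \<in> states V. J b}. g (h J) = J"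
      using FG GV by (auto simp: g_def h_def states_def fun_eq_iff) (metis FG)
    show "\<forall>J\<in>{J \<in> states V. J a}. h (g J) = J"
      using GF FV by (auto simp: g_def h_def states_def fun_eq_iff) (metis GF)
    show "h ` {J \<in> states V. J b} \<subseteq> {J \<in> states V. J a}"
      using Fa assms(6) by (auto simp: h_def states_def)
    show "g ` {J \<in> states V. J a} \<subseteq> {J \<in> states V. J b}"
      using GF Fa assms(6,7) by (auto simp: g_def states_def)
  qed
  have qe: "q (h J) = q J" if J: "J \<in> states V" for J
  proof -
    have hs: "h J \<in> states V" by (auto simp: h_def states_def)
    have "induced_iso V E (h J) J"
      unfolding induced_iso_def graph_iso_def
    proof (intro exI conjI)
      show "bij_betw F (active V (h J)) (active V J)"
      proof (rule bij_betw_byWitness[where f'=G])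
        show "\<forall>x\<in>active V (h J). G (F x) = x" using GF by (auto simp: active_def)
        show "\<forall>y\<in>active V J. F (G y) = y" using FG by (auto simp: active_def)
        show "F ` active V (h J) \<subseteq> active V J" using FV by (auto simp: active_def h_def)
        show "G ` active V J \<subseteq> active V (h J)" using GV FG by (auto simp: active_def h_def)
      qed
      show "\<forall>x\<in>active V (h J). \<forall>y\<in>active V (h J).
        (x \<in> active V (h J) \<and> y \<in> active V (h J) \<and> E x y) =
        (F x \<in> active V J \<and> F y \<in> active V J \<and> E (F x) (F y))"
        using pres FV by (auto simp: active_def h_def)
    qed
    then show ?thesis using assms(5) hs J by blast
  qed
  have "(\<Sum>J\<in>{J\<in>states V. J a}. q J) = (\<Sum>J\<in>{J\<in>states V. J b}. q (h J))"
    using sum.reindex_bij_betw[OF hb, of q] by simp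
  also have "\<dots> = (\<Sum>J\<in>{J\<in>states V. J b}. q J)"
    by (rule sum.cong) (auto simp: qe)
  finally show ?thesis .
qed

end
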